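(* Let $n>2$ and $1<k<n$. In $H_B(n,k)$ the eccentricity of a vertex $v$ is $e(v)=3$ if $v\in V_1$; $e(v)=2$ if $v\in V_2$ is an $n$-vertex; and $e(v)=4$ if $v\in V_2$ is an $r$-vertex with $1\le r<n$.
   Context: Fix integers $n\ge 2$ and $1\le k<n$ and positive real numbers $x_1<x_2<\dots<x_n$. Let $\mathscr{B}_n=\{\pm x_1,\pm x_2,\dots,\pm x_{n-1},x_n\}$ (so $-x_n\notin\mathscr{B}_n$). Let $\phi(\mathscr{B}_n)$ be the family of all nonempty subsets $S\subseteq\mathscr{B}_n$ whose elements have pairwise distinct absolute values and whose element of largest absolute value is positive. Let $\mathscr{B}_n^+=\{x_1,\dots,x_n\}$, let $V_1$ be the set of all $k$-element subsets of $\mathscr{B}_n^+$, and let $V_2=\phi(\mathscr{B}_n)\setminus V_1$. For $A\in\phi(\mathscr{B}_n)$ put $A^\dagger=\{|a|:a\in A\}$. The bipartite Kneser B type-$k$ graph $H_B(n,k)$ is the simple graph with vertex set $V_1\cup V_2$ in which $X\in V_1$ and $Y\in V_2$ are adjacent if and only if $X\subseteq Y^\dagger$ or $Y^\dagger\subseteq X$, and there are no other edges. An $r$-vertex is a vertex having exactly $r$ elements. The eccentricity $e(v)$ is the maximum distance from $v$ to any vertex. *)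

theory Defs
  imports Main "HOL-Library.Extended_Nat"
begin

definition Bset :: "(nat \<Rightarrow> real) \<Rightarrow> nat \<Rightarrow> real set" where
  "Bset x n = {x i | i. 1 \<le> i \<and> i \<le> n} \<union> {- x i | i. 1 \<le> i \<and> i \<le> n - 1}"

definition Bplus :: "(nat \<Rightarrow> real) \<Rightarrow> nat \<Rightarrow> real set" where
  "Bplus x n = {x i | i. 1 \<le> i \<and> i \<le> n}"

definition phiB :: "(nat \<Rightarrow> real) \<Rightarrow> nat \<Rightarrow> real set set" where
  "phiB x n = {S. S \<subseteq> Bset x n \<and> S \<noteq> {} \<and> inj_on abs S \<and>
      (\<forall>a\<in>S. (\<forall>b\<in>S. \<bar>b\<bar> \<le> \<bar>a\<bar>) \<longrightarrow> 0 < a)}"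

definition V1 :: "(nat \<Rightarrow> real) \<Rightarrow> nat \<Rightarrow> nat \<Rightarrow> real set set" where
  "V1 x n k = {S. S \<subseteq> Bplus x n \<and> card S = k}"

definition V2 :: "(nat \<Rightarrow> real) \<Rightarrow> nat \<Rightarrow> nat \<Rightarrow> real set set" where
  "V2 x n k = phiB x n - V1 x n k"

definition HBverts :: "(nat \<Rightarrow> real) \<Rightarrow> nat \<Rightarrow> nat \<Rightarrow> real set set" where
  "HBverts x n k = V1 x n k \<union> V2 x n k"

definition HBadj :: "(nat \<Rightarrow> real) \<Rightarrow> nat \<Rightarrow> nat \<Rightarrow> real set \<Rightarrow> real set \<Rightarrow> bool" where
  "HBadj x n k A B \<longleftrightarrow>
     (A \<in> V1 x n k \<and> B \<in> V2 x n k \<and> (A \<subseteq> abs ` B \<or> abs ` B \<subseteq> A)) \<or>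
     (B \<in> V1 x n k \<and> A \<in> V2 x n k \<and> (B \<subseteq> abs ` A \<or> abs ` A \<subseteq> B))"

definition HBedges :: "(nat \<Rightarrow> real) \<Rightarrow> nat \<Rightarrow> nat \<Rightarrow> (real set \<times> real set) set" where
  "HBedges x n k = {(A, B). HBadj x n k A B}"

definition HBdist :: "(nat \<Rightarrow> real) \<Rightarrow> nat \<Rightarrow> nat \<Rightarrow> real set \<Rightarrow> real set \<Rightarrow> enat" where
  "HBdist x n k v w = (INF m \<in> {m. (v, w) \<in> (HBedges x n k) ^^ m}. enat m)"

definition HBecc :: "(nat \<Rightarrow> real) \<Rightarrow> nat \<Rightarrow> nat \<Rightarrow> real set \<Rightarrow> enat" where
  "HBecc x n k v = (SUP w \<in> HBverts x n k. HBdist x n k v w)"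

end

theory Submission
  imports Defs
begin

lemma dist_le: "(v,w) \<in> HBedges x n k ^^ m \<Longrightarrow> HBdist x n k v w \<le> enat m"
  unfolding HBdist_def by (rule INF_lower) auto

lemma dist_ge: "(\<And>m. m < c \<Longrightarrow> (v,w) \<notin> HBedges x n k ^^ m) \<Longrightarrow> enat c \<le> HBdist x n k v w"
  unfolding HBdist_def by (rule INF_greatest) (metis mem_Collect_eq enat_ord_simps(1) not_le)

lemma ecc_eq:
  assumes "\<And>w. w \<in> HBverts x n k \<Longrightarrow> HBdist x n k v w \<le> enat c"
    and "w0 \<in> HBverts x n k" "enat c \<le> HBdist x n k v w0"
  shows "HBecc x n k v = enat c"
  unfolding HBecc_def
proof (rule antisym)
  show "(SUP w\<in>HBverts x n k. HBdist x n k v w) \<le> enat c" using assms(1) by (rule SUP_least)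
  show "enat c \<le> (SUP w\<in>HBverts x n k. HBdist x n k v w)"
    using assms(2,3) by (rule SUP_upper2)
qed

lemma edge_iff: "(A,B) \<in> HBedges x n k \<longleftrightarrow> HBadj x n k A B"
  by (simp add: HBedges_def)

lemma adj_sym: "HBadj x n k A B \<Longrightarrow> HBadj x n k B A"
  unfolding HBadj_def by blast

lemma V12_disj: "A \<in> V1 x n k \<Longrightarrow> A \<notin> V2 x n k"
  by (simp add: V2_def)

lemma parity:
  "(v,w) \<in> HBedges x n k ^^ m \<Longrightarrow>
    (v \<in> V1 x n k \<longrightarrow> (if even m then w \<in> V1 x n k else w \<in> V2 x n k)) \<and>
    (v \<in> V2 x n k \<longrightarrow> (if even m then w \<in> V2 x n k else w \<in> V1 x n k))"
proof (induction m arbitrary: w)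
  case 0 then show ?case by simp
next
  case (Suc m)
  then obtain u where u: "(v,u) \<in> HBedges x n k ^^ m" "(u,w) \<in> HBedges x n k" by auto
  from u(2) have "HBadj x n k u w" by (simp add: edge_iff)
  then have "(u \<in> V1 x n k \<and> w \<in> V2 x n k) \<or> (u \<in> V2 x n k \<and> w \<in> V1 x n k)"
    unfolding HBadj_def by blast
  with Suc.IH[OF u(1)] show ?case using V12_disj by (auto split: if_splits)
qed

lemma par_even: "v \<in> V1 x n k \<Longrightarrow> w \<in> V2 x n k \<Longrightarrow> even m \<Longrightarrow> (v,w) \<notin> HBedges x n k ^^ m"
  using parity V12_disj by metis

lemma par_odd: "v \<in> V2 x n k \<Longrightarrow> w \<in> V2 x n k \<Longrightarrow> odd m \<Longrightarrow> (v,w) \<notin> HBedges x n k ^^ m"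
  using parity V12_disj by metis

lemma walk2: assumes "(a,b) \<in> R" "(b,c) \<in> R" shows "(a,c) \<in> R ^^ 2"
  proof -
  have "(a,c) \<in> R ^^ Suc (Suc 0)" by (rule relpow_Suc_I2[OF assms(1) relpow_Suc_I2[OF assms(2) relpow_0_I]])
  then show ?thesis by (simp add: numeral_eq_Suc)
qed
lemma walk3: assumes "(a,b) \<in> R" "(b,c) \<in> R" "(c,d) \<in> R" shows "(a,d) \<in> R ^^ 3"
  proof -
  have "(a,d) \<in> R ^^ Suc (Suc (Suc 0))" by (rule relpow_Suc_I2[OF assms(1) relpow_Suc_I2[OF assms(2) relpow_Suc_I2[OF assms(3) relpow_0_I]]])
  then show ?thesis by (simp add: numeral_eq_Suc)
qed
lemma walk4: assumes "(a,b) \<in> R" "(b,c) \<in> R" "(c,d) \<in> R" "(d,e) \<in> R" shows "(a,e) \<in> R ^^ 4"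
  proof -
  have "(a,e) \<in> R ^^ Suc (Suc (Suc (Suc 0)))" by (rule relpow_Suc_I2[OF assms(1) relpow_Suc_I2[OF assms(2) relpow_Suc_I2[OF assms(3) relpow_Suc_I2[OF assms(4) relpow_0_I]]]])
  then show ?thesis by (simp add: numeral_eq_Suc)
qed

context
  fixes x :: "nat \<Rightarrow> real" and n k :: nat
  assumes n2: "n > 2" and k1: "1 < k" and kn: "k < n"
    and pos: "\<forall>i. 1 \<le> i \<and> i \<le> n \<longrightarrow> 0 < x i"
    and mono: "\<forall>i j. 1 \<le> i \<and> i < j \<and> j \<le> n \<longrightarrow> x i < x j"
begin

lemma injx: "inj_on x {1..n}"
proof (rule inj_onI)
  fix i j assume "i \<in> {1..n}" "j \<in> {1..n}" "x i = x j"
  then show "i = j" using mono by (metis atLeastAtMost_iff less_irrefl linorder_neqE_nat)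
qed

lemma P_eq: "Bplus x n = x ` {1..n}" by (auto simp: Bplus_def)

lemma finP: "finite (Bplus x n)" by (simp add: P_eq)

lemma cardP: "card (Bplus x n) = n" using injx by (simp add: P_eq card_image)

lemma P_pos: "p \<in> Bplus x n \<Longrightarrow> 0 < p" using pos by (auto simp: Bplus_def)

lemma P_le_xn: "p \<in> Bplus x n \<Longrightarrow> p \<le> x n"
proof -
  assume "p \<in> Bplus x n"
  then obtain i where "p = x i" "1 \<le> i" "i \<le> n" by (auto simp: Bplus_def)
  then show ?thesis using mono by (cases "i = n") (auto intro: less_imp_le)
qed

lemma Bset_abs: "a \<in> Bset x n \<Longrightarrow> \<bar>a\<bar> \<in> Bplus x n"
proof -
  assume "a \<in> Bset x n"
  then obtain i where "a = x i \<or> a = - x i" "1 \<le> i" "i \<le> n" unfolding Bset_def by force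
  moreover then have "0 < x i" using pos by blast
  ultimately have "\<bar>a\<bar> = x i" "1 \<le> i" "i \<le> n" by auto
  then show ?thesis by (auto simp: Bplus_def)
qed

lemma P_sub_B: "Bplus x n \<subseteq> Bset x n" by (auto simp: Bset_def Bplus_def)

lemma finB: "finite (Bset x n)"
proof -
  have "Bset x n = x ` {1..n} \<union> (\<lambda>i. - x i) ` {1..n-1}" by (auto simp: Bset_def)
  then show ?thesis by simp
qed

lemma abs_pos_set: "S \<subseteq> Bplus x n \<Longrightarrow> abs ` S = S"
proof -
  assume "S \<subseteq> Bplus x n"
  then have "\<forall>s\<in>S. \<bar>s\<bar> = s" using P_pos by force
  then show ?thesis by (metis image_cong image_ident)
qed

lemma phi_props:
  assumes "S \<in> phiB x n"
  shows "finite S" "abs ` S \<subseteq> Bplus x n" "card (abs ` S) = card S" "S \<noteq> {}"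
proof -
  have S: "S \<subseteq> Bset x n" "S \<noteq> {}" "inj_on abs S" using assms by (auto simp: phiB_def)
  show "finite S" using S finB finite_subset by blast
  show "abs ` S \<subseteq> Bplus x n" using S Bset_abs by blast
  show "card (abs ` S) = card S" using S card_image by blast
  show "S \<noteq> {}" using S by blast
qed

lemma pos_in_phi: "S \<subseteq> Bplus x n \<Longrightarrow> S \<noteq> {} \<Longrightarrow> S \<in> phiB x n"
  unfolding phiB_def using P_sub_B P_pos abs_pos_set
  by (auto intro!: inj_onI) (metis abs_of_pos subsetD)+

lemma V1_phi: "X \<in> V1 x n k \<Longrightarrow> X \<in> phiB x n"
  using k1 by (auto simp: V1_def intro!: pos_in_phi)

lemma verts: "HBverts x n k = phiB x n"
  using V1_phi by (auto simp: HBverts_def V2_def)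

lemma hub_V2: "Bplus x n \<in> V2 x n k"
proof -
  have "Bplus x n \<noteq> {}" using cardP n2 by auto
  then show ?thesis using pos_in_phi[of "Bplus x n"] cardP kn by (auto simp: V2_def V1_def)
qed

lemma single_V2: "p \<in> Bplus x n \<Longrightarrow> {p} \<in> V2 x n k"
  using pos_in_phi[of "{p}"] k1 by (auto simp: V2_def V1_def)

lemma full_adj:
  assumes "X \<in> V1 x n k" "Y \<in> V2 x n k" "abs ` Y = Bplus x n"
  shows "(X,Y) \<in> HBedges x n k" "(Y,X) \<in> HBedges x n k"
  using assms by (auto simp: edge_iff HBadj_def V1_def)

lemma full_abs:
  assumes "Y \<in> V2 x n k" "card Y = n" shows "abs ` Y = Bplus x n"
proof -
  have Y: "Y \<in> phiB x n" using assms by (simp add: V2_def)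
  show ?thesis using phi_props[OF Y] assms(2) cardP finP by (metis card_subset_eq)
qed

lemma nbr:
  assumes "w \<in> V2 x n k"
  shows "\<exists>X\<in>V1 x n k. (X,w) \<in> HBedges x n k \<and> (w,X) \<in> HBedges x n k"
proof -
  have w: "w \<in> phiB x n" using assms by (simp add: V2_def)
  define S where "S = abs ` w"
  have S: "S \<subseteq> Bplus x n" "finite S" using phi_props[OF w] finP finite_subset by (auto simp: S_def)
  have "\<exists>X. X \<in> V1 x n k \<and> (X \<subseteq> S \<or> S \<subseteq> X)"
  proof (cases "k \<le> card S")
    case True
    then obtain X where "X \<subseteq> S" "card X = k" by (metis obtain_subset_with_card_n)
    then show ?thesis using S by (auto simp: V1_def)
  next
    case False
    have "card (Bplus x n - S) = n - card S" using S cardP by (simp add: card_Diff_subset finite_subset)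
    then have "k - card S \<le> card (Bplus x n - S)" using kn by linarith
    then obtain T where T: "T \<subseteq> Bplus x n - S" "card T = k - card S" "finite T"
      by (metis obtain_subset_with_card_n)
    have "card (S \<union> T) = card S + card T" using T S by (intro card_Un_disjoint) auto
    then have "card (S \<union> T) = k" using T False by simp
    moreover have "S \<union> T \<subseteq> Bplus x n" using S T by auto
    ultimately show ?thesis by (intro exI[of _ "S \<union> T"]) (auto simp: V1_def)
  qed
  then show ?thesis using assms by (auto simp: edge_iff HBadj_def S_def)
qed

lemma compl:
  assumes "Z \<in> V2 x n k" "card Z < n"
  shows "\<exists>W\<in>V2 x n k. abs ` W = Bplus x n - abs ` Z"
proof -
  have Z: "Z \<in> phiB x n" using assms by (simp add: V2_def)
  define C where "C = Bplus x n - abs ` Z"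
  have C: "C \<subseteq> Bplus x n" "finite C" using finP by (auto simp: C_def)
  have cC: "card C = n - card Z" using phi_props[OF Z] cardP finP
    by (simp add: C_def card_Diff_subset finite_subset)
  show ?thesis
  proof (cases "card C = k")
    case False
    have "C \<noteq> {}" using cC assms(2) by auto
    then have "C \<in> V2 x n k" using pos_in_phi[OF C(1)] False by (auto simp: V2_def V1_def)
    then show ?thesis using abs_pos_set[OF C(1)] by (auto simp: C_def)
  next
    case True
    then have "2 \<le> card C" using k1 by simp
    then obtain c1 c2 where c12: "c1 \<in> C" "c2 \<in> C" "c1 \<noteq> c2"
    proof -
      have "\<not> card C \<le> Suc 0" using \<open>2 \<le> card C\<close> by simp
      then have "\<not> (\<forall>a\<in>C. \<forall>b\<in>C. a = b)" using card_le_Suc0_iff_eq[OF C(2)] by simp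
      then show ?thesis using that by blast
    qed
    define a where "a = Min C"
    define b where "b = Max C"
    have Cne: "C \<noteq> {}" using c12 by auto
    have aC: "a \<in> C" and bC: "b \<in> C" using C Cne by (auto simp: a_def b_def intro: Min_in Max_in)
    have ab: "a < b"
    proof (rule ccontr)
      assume "\<not> a < b"
      moreover have "a \<le> c1" "a \<le> c2" "c1 \<le> b" "c2 \<le> b" using C c12 by (auto simp: a_def b_def)
      ultimately have "c1 = c2" by linarith
      then show False using c12 by simp
    qed
    have amin: "\<And>c. c \<in> C \<Longrightarrow> a \<le> c" using C by (simp add: a_def)
    obtain i where i: "a = x i" "1 \<le> i" "i \<le> n" using aC C by (auto simp: Bplus_def)
    have "i \<noteq> n" using P_le_xn[of b] bC C i ab by auto
    then have negB: "- a \<in> Bset x n" using i by (auto simp: Bset_def)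
    have apos: "0 < a" using aC C P_pos by auto
    define W where "W = insert (- a) (C - {a})"
    have absW: "abs ` W = C" 
    proof -
      have "abs ` (C - {a}) = C - {a}" using abs_pos_set[of "C - {a}"] C by auto
      then show ?thesis using apos aC by (auto simp: W_def)
    qed
    have WB: "W \<subseteq> Bset x n" using negB C P_sub_B by (auto simp: W_def)
    have injW: "inj_on abs W"
    proof -
      have "inj_on abs (C - {a})"
      proof (rule inj_onI)
        fix u v assume "u \<in> C - {a}" "v \<in> C - {a}" "\<bar>u\<bar> = \<bar>v\<bar>"
        then show "u = v" using C P_pos by (metis DiffD1 abs_of_pos subsetD)
      qed
      moreover have "\<bar>- a\<bar> \<notin> abs ` (C - {a} - {- a})"
        using abs_pos_set[of "C - {a}"] C apos by auto
      ultimately show ?thesis by (simp add: W_def)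
    qed
    have maxW: "\<forall>a'\<in>W. (\<forall>b'\<in>W. \<bar>b'\<bar> \<le> \<bar>a'\<bar>) \<longrightarrow> 0 < a'"
    proof (intro ballI impI)
      fix a' assume a': "a' \<in> W" "\<forall>b'\<in>W. \<bar>b'\<bar> \<le> \<bar>a'\<bar>"
      show "0 < a'"
      proof (cases "a' = - a")
        case True
        have "b \<in> W" using bC ab by (auto simp: W_def)
        then have "\<bar>b\<bar> \<le> \<bar>-a\<bar>" using a' True by auto
        then show ?thesis using ab apos by auto
      next
        case False
        then have "a' \<in> C" using a' by (auto simp: W_def)
        then show ?thesis using C P_pos by auto
      qed
    qed
    have "W \<in> phiB x n" using WB injW maxW by (auto simp: phiB_def W_def)
    moreover have "W \<notin> V1 x n k" using apos P_pos by (force simp: V1_def W_def)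
    ultimately show ?thesis using absW by (auto simp: V2_def C_def)
  qed
qed

lemma no_common:
  assumes "Z \<in> V2 x n k" "W \<in> V2 x n k" "abs ` W = Bplus x n - abs ` Z"
  shows "(Z,W) \<notin> HBedges x n k ^^ 2"
proof
  assume "(Z,W) \<in> HBedges x n k ^^ 2"
  then obtain u where u: "(Z,u) \<in> HBedges x n k" "(u,W) \<in> HBedges x n k"
    by (auto simp: numeral_eq_Suc)
  have Zp: "Z \<in> phiB x n" and Wp: "W \<in> phiB x n" using assms by (auto simp: V2_def)
  have uV1: "u \<in> V1 x n k" and h1: "u \<subseteq> abs ` Z \<or> abs ` Z \<subseteq> u" and h2: "u \<subseteq> abs ` W \<or> abs ` W \<subseteq> u"
    using u assms V12_disj by (auto simp: edge_iff HBadj_def)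
  have uP: "u \<subseteq> Bplus x n" "card u = k" using uV1 by (auto simp: V1_def)
  have "u \<noteq> {}" using uP k1 by auto
  have ZW: "abs ` Z \<noteq> {}" "abs ` W \<noteq> {}" using phi_props(4)[OF Zp] phi_props(4)[OF Wp] by auto
  have ZP: "abs ` Z \<subseteq> Bplus x n" using phi_props(2)[OF Zp] .
  show False
  proof (cases "u \<subseteq> abs ` Z")
    case True
    with h2 assms(3) ZW \<open>u \<noteq> {}\<close> show False by blast
  next
    case False
    then have Zu: "abs ` Z \<subseteq> u" using h1 by blast
    show False
    proof (cases "u \<subseteq> abs ` W")
      case True then show False using Zu assms(3) ZW by blast
    next
      case False
      then have "abs ` W \<subseteq> u" using h2 by blast
      moreover have "Bplus x n = abs ` W \<union> abs ` Z" using assms(3) ZP by auto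
      ultimately have "Bplus x n \<subseteq> u" using Zu by (simp only: Un_subset_iff)
      then have "u = Bplus x n" using uP by blast
      then show False using uP cardP kn by simp
    qed
  qed
qed

lemma dist_le2: "(v,w) \<in> HBedges x n k ^^ m \<Longrightarrow> m \<le> c \<Longrightarrow> HBdist x n k v w \<le> enat c"
  using dist_le by (meson enat_ord_simps(1) order_trans)

lemma verts_cases: "w \<in> HBverts x n k \<Longrightarrow> w \<in> V1 x n k \<or> w \<in> V2 x n k"
  by (simp add: HBverts_def)

lemma in_verts: "w \<in> V2 x n k \<Longrightarrow> w \<in> HBverts x n k"
  by (simp add: HBverts_def)

lemma ecc_V1:
  assumes v: "v \<in> V1 x n k" shows "HBecc x n k v = 3"
proof -
  have H: "Bplus x n \<in> V2 x n k" by (rule hub_V2)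
  have absH: "abs ` Bplus x n = Bplus x n" by (rule abs_pos_set) simp
  have vH: "(v, Bplus x n) \<in> HBedges x n k" "(Bplus x n, v) \<in> HBedges x n k"
    using full_adj[OF v H absH] by auto
  have up: "HBdist x n k v w \<le> enat 3" if w: "w \<in> HBverts x n k" for w
  proof (cases "w \<in> V1 x n k")
    case True
    have "(v,w) \<in> HBedges x n k ^^ 2" using vH full_adj[OF True H absH] by (intro walk2) auto
    then show ?thesis by (rule dist_le2) simp
  next
    case False
    then have w2: "w \<in> V2 x n k" using verts_cases[OF w] by blast
    obtain X where X: "X \<in> V1 x n k" "(X,w) \<in> HBedges x n k" using nbr[OF w2] by blast
    have "(v,w) \<in> HBedges x n k ^^ 3" using vH full_adj[OF X(1) H absH] X(2) by (intro walk3) auto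
    then show ?thesis by (rule dist_le2) simp
  qed
  have vP: "v \<subseteq> Bplus x n" "card v = k" using v by (auto simp: V1_def)
  have "Bplus x n - v \<noteq> {}"
  proof
    assume "Bplus x n - v = {}"
    then have "Bplus x n \<subseteq> v" by blast
    then have "card (Bplus x n) \<le> card v" using vP k1 by (intro card_mono) (auto intro: card_ge_0_finite)
    then show False using cardP vP kn by simp
  qed
  then obtain p where p: "p \<in> Bplus x n" "p \<notin> v" by blast
  have pV: "{p} \<in> V2 x n k" using single_V2[OF p(1)] .
  have pabs: "abs ` {p} = {p}" using abs_pos_set[of "{p}"] p by auto
  have low: "enat 3 \<le> HBdist x n k v {p}"
  proof (rule dist_ge)
    fix m :: nat assume "m < 3"
    then have "m = 0 \<or> m = 1 \<or> m = 2" by arith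
    then show "(v,{p}) \<notin> HBedges x n k ^^ m"
    proof (elim disjE)
      assume "m = 0" then show ?thesis using v pV V12_disj by auto
    next
      assume "m = 1"
      have "\<not> v \<subseteq> {p}"
      proof
        assume "v \<subseteq> {p}" then have "card v \<le> 1" using card_mono[of "{p}" v] by simp
        then show False using vP k1 by simp
      qed
      moreover have "{p} \<notin> V1 x n k" using pV by (simp add: V2_def)
      ultimately have "\<not> HBadj x n k v {p}" using p pabs by (auto simp: HBadj_def)
      then show ?thesis using \<open>m = 1\<close> by (simp add: edge_iff)
    next
      assume "m = 2"
      then show ?thesis using par_even[OF v pV] by simp
    qed
  qed
  have "HBecc x n k v = enat 3"
    by (rule ecc_eq[OF up in_verts[OF pV] low])
  then show ?thesis by (simp add: numeral_eq_enat)
qed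

lemma ecc_full:
  assumes v: "v \<in> V2 x n k" and cv: "card v = n" shows "HBecc x n k v = 2"
proof -
  have absv: "abs ` v = Bplus x n" by (rule full_abs[OF v cv])
  have up: "HBdist x n k v w \<le> enat 2" if w: "w \<in> HBverts x n k" for w
  proof (cases "w \<in> V1 x n k")
    case True
    have "(v,w) \<in> HBedges x n k ^^ 1" using full_adj[OF True v absv] by simp
    then show ?thesis by (rule dist_le2) simp
  next
    case False
    then have w2: "w \<in> V2 x n k" using verts_cases[OF w] by blast
    obtain X where X: "X \<in> V1 x n k" "(X,w) \<in> HBedges x n k" using nbr[OF w2] by blast
    have "(v,w) \<in> HBedges x n k ^^ 2" using full_adj[OF X(1) v absv] X(2) by (intro walk2) auto
    then show ?thesis by (rule dist_le2) simp
  qed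
  have "Bplus x n \<noteq> {}" using cardP n2 by auto
  then obtain p where p: "p \<in> Bplus x n" by blast
  have pV: "{p} \<in> V2 x n k" using single_V2[OF p] .
  have low: "enat 2 \<le> HBdist x n k v {p}"
  proof (rule dist_ge)
    fix m :: nat assume "m < 2"
    then have "m = 0 \<or> m = 1" by arith
    then show "(v,{p}) \<notin> HBedges x n k ^^ m"
    proof (elim disjE)
      assume "m = 0" then show ?thesis using cv n2 by auto
    next
      assume "m = 1"
      then show ?thesis using par_odd[OF v pV, of m] by simp
    qed
  qed
  have "HBecc x n k v = enat 2"
    by (rule ecc_eq[OF up in_verts[OF pV] low])
  then show ?thesis by (simp add: numeral_eq_enat)
qed

lemma ecc_part:
  assumes v: "v \<in> V2 x n k" and cv: "card v < n" shows "HBecc x n k v = 4"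
proof -
  have H: "Bplus x n \<in> V2 x n k" by (rule hub_V2)
  have absH: "abs ` Bplus x n = Bplus x n" by (rule abs_pos_set) simp
  obtain X' where X': "X' \<in> V1 x n k" "(v,X') \<in> HBedges x n k" using nbr[OF v] by blast
  have X'H: "(X', Bplus x n) \<in> HBedges x n k" using full_adj[OF X'(1) H absH] by simp
  have up: "HBdist x n k v w \<le> enat 4" if w: "w \<in> HBverts x n k" for w
  proof (cases "w \<in> V1 x n k")
    case True
    have "(v,w) \<in> HBedges x n k ^^ 3" using X'(2) X'H full_adj[OF True H absH] by (intro walk3) auto
    then show ?thesis by (rule dist_le2) simp
  next
    case False
    then have w2: "w \<in> V2 x n k" using verts_cases[OF w] by blast
    obtain X where X: "X \<in> V1 x n k" "(X,w) \<in> HBedges x n k" using nbr[OF w2] by blast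
    have "(v,w) \<in> HBedges x n k ^^ 4" using X'(2) X'H full_adj[OF X(1) H absH] X(2) by (intro walk4) auto
    then show ?thesis by (rule dist_le2) simp
  qed
  obtain W where W: "W \<in> V2 x n k" "abs ` W = Bplus x n - abs ` v" using compl[OF v cv] by blast
  have vne: "abs ` v \<noteq> {}" using phi_props(4)[of v] v by (auto simp: V2_def)
  have low: "enat 4 \<le> HBdist x n k v W"
  proof (rule dist_ge)
    fix m :: nat assume "m < 4"
    then have "m = 0 \<or> m = 1 \<or> m = 2 \<or> m = 3" by arith
    then show "(v,W) \<notin> HBedges x n k ^^ m"
    proof (elim disjE)
      assume "m = 0" then show ?thesis using W vne by auto
    next
      assume "m = 1"
      then show ?thesis using par_odd[OF v W(1), of m] by simp
    next
      assume "m = 2" then show ?thesis using no_common[OF v W(1) W(2)] by simp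
    next
      assume "m = 3"
      then show ?thesis using par_odd[OF v W(1), of m] by simp
    qed
  qed
  have "HBecc x n k v = enat 4"
    by (rule ecc_eq[OF up in_verts[OF W(1)] low])
  then show ?thesis by (simp add: numeral_eq_enat)
qed

lemma main_ctx:
  "\<forall>v. (v \<in> V1 x n k \<longrightarrow> HBecc x n k v = 3) \<and>
             (v \<in> V2 x n k \<and> card v = n \<longrightarrow> HBecc x n k v = 2) \<and>
             (v \<in> V2 x n k \<and> 1 \<le> card v \<and> card v < n \<longrightarrow> HBecc x n k v = 4)"
  using ecc_V1 ecc_full ecc_part by blast

end

theorem mainTheorem12:
  fixes x :: "nat \<Rightarrow> real" and n k :: nat
  assumes "n > 2" and "1 < k" and "k < n"
    and "\<forall>i. 1 \<le> i \<and> i \<le> n \<longrightarrow> 0 < x i"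
    and "\<forall>i j. 1 \<le> i \<and> i < j \<and> j \<le> n \<longrightarrow> x i < x j"
  shows "\<forall>v. (v \<in> V1 x n k \<longrightarrow> HBecc x n k v = 3) \<and>
             (v \<in> V2 x n k \<and> card v = n \<longrightarrow> HBecc x n k v = 2) \<and>
             (v \<in> V2 x n k \<and> 1 \<le> card v \<and> card v < n \<longrightarrow> HBecc x n k v = 4)"
  by (rule main_ctx[OF assms])

end
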